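(* If a $\sigma$-structure $\mathcal{A}$ has a $\mathfrak{g}$-guarded decomposition $\tau$, then (1) every maximal $\mathfrak{g}$-guarded subset of $A$ is $\lambda(p)$ for some $p \in P_{\tau}$; and (2) every clique in the Gaifman graph of $\mathcal{A}$ is $\mathfrak{g}$-guarded.
   Context: $\mathfrak{g}$ is atom, loose or clique guarding; $\mathfrak{g}$-guarded plays are non-empty lists of $\mathfrak{g}$-guarded sets, ordered by prefix $\sqsubseteq$, with $\lambda(p)$ the last element. For a focussed play $\langle p,a\rangle$ ($a\in\lambda(p)$), $[p,a]$ is its class under $\langle p,a\rangle\sim\langle q,a'\rangle$ iff $a=a'$, $p\sqcap q$ non-empty, and $a\in\lambda(u)$ for all $u$ on the prefix-order paths from $p\sqcap q$ to $p$ and $q$. A $\mathfrak{g}$-guarded decomposition of $\mathcal{A}$ is a map $\tau$ from $A$ to plays, with image $P_\tau$, that is reflexive ($a\in\lambda(\tau(a))$), edge covering (Gaifman-adjacent $a,b$ lie in some $\lambda(p)$, $p\in P_\tau$), minimal ($[\tau(a),a]=[q,a]$ implies $\tau(a)\sqsubseteq q$) and vertex connected (for $q$ below some element of $P_\tau$ with $a\in\lambda(q)$, $[\tau(a),a]=[q,a]$). *)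

theory Defs
  imports Main "HOL-Library.Sublist"
begin

text \<open>A sigma-structure: signature = relation symbols of type 'r with arity ar;
  universe A; interpretation R r, a set of tuples (lists) of length ar r over A.\<close>

definition sigma_structure :: "('r \<Rightarrow> nat) \<Rightarrow> 'a set \<Rightarrow> ('r \<Rightarrow> 'a list set) \<Rightarrow> bool" where
  "sigma_structure ar A R \<longleftrightarrow> (\<forall>r. \<forall>t\<in>R r. length t = ar r \<and> set t \<subseteq> A)"

definition gaifman_adj :: "('r \<Rightarrow> 'a list set) \<Rightarrow> 'a \<Rightarrow> 'a \<Rightarrow> bool" where
  "gaifman_adj R a b \<longleftrightarrow> a \<noteq> b \<and> (\<exists>r. \<exists>t\<in>R r. a \<in> set t \<and> b \<in> set t)"

definition gaifman_clique :: "'a set \<Rightarrow> ('r \<Rightarrow> 'a list set) \<Rightarrow> 'a set \<Rightarrow> bool" where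
  "gaifman_clique A R X \<longleftrightarrow> X \<noteq> {} \<and> X \<subseteq> A \<and>
     (\<forall>a\<in>X. \<forall>b\<in>X. a \<noteq> b \<longrightarrow> gaifman_adj R a b)"

datatype guarding = AtomG | LooseG | CliqueG

definition atom_guarded :: "'a set \<Rightarrow> ('r \<Rightarrow> 'a list set) \<Rightarrow> 'a set \<Rightarrow> bool" where
  "atom_guarded A R X \<longleftrightarrow> X \<noteq> {} \<and> X \<subseteq> A \<and>
     ((\<exists>a. X = {a}) \<or> (\<exists>r. \<exists>t\<in>R r. X \<subseteq> set t))"

definition loose_guarded :: "'a set \<Rightarrow> ('r \<Rightarrow> 'a list set) \<Rightarrow> 'a set \<Rightarrow> bool" where
  "loose_guarded A R X \<longleftrightarrow> X \<noteq> {} \<and> X \<subseteq> A \<and>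
     (\<forall>a\<in>X. \<forall>b\<in>X. \<exists>Y. atom_guarded A R Y \<and> a \<in> Y \<and> b \<in> Y)"

definition clique_guarded :: "'a set \<Rightarrow> ('r \<Rightarrow> 'a list set) \<Rightarrow> 'a set \<Rightarrow> bool" where
  "clique_guarded A R X \<longleftrightarrow> gaifman_clique A R X"

fun guarded :: "guarding \<Rightarrow> 'a set \<Rightarrow> ('r \<Rightarrow> 'a list set) \<Rightarrow> 'a set \<Rightarrow> bool" where
  "guarded AtomG A R X = atom_guarded A R X"
| "guarded LooseG A R X = loose_guarded A R X"
| "guarded CliqueG A R X = clique_guarded A R X"

definition maximal_guarded :: "guarding \<Rightarrow> 'a set \<Rightarrow> ('r \<Rightarrow> 'a list set) \<Rightarrow> 'a set \<Rightarrow> bool" where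
  "maximal_guarded g A R X \<longleftrightarrow> guarded g A R X \<and>
     (\<forall>Y. guarded g A R Y \<and> X \<subseteq> Y \<longrightarrow> Y = X)"

text \<open>A guarded play: non-empty list of guarded sets; order = prefix; lambda p = last p;
  meet p \<sqinter> q = longest common prefix.\<close>
definition guarded_play :: "guarding \<Rightarrow> 'a set \<Rightarrow> ('r \<Rightarrow> 'a list set) \<Rightarrow> 'a set list \<Rightarrow> bool" where
  "guarded_play g A R p \<longleftrightarrow> p \<noteq> [] \<and> (\<forall>X\<in>set p. guarded g A R X)"

definition lam :: "'a set list \<Rightarrow> 'a set" where
  "lam p = last p"

definition focus_sim :: "'a set list \<Rightarrow> 'a \<Rightarrow> 'a set list \<Rightarrow> 'a \<Rightarrow> bool" where
  "focus_sim p a q a' \<longleftrightarrow> a = a' \<and> longest_common_prefix p q \<noteq> [] \<and>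
     (\<forall>u. (prefix (longest_common_prefix p q) u \<and> prefix u p) \<or>
          (prefix (longest_common_prefix p q) u \<and> prefix u q) \<longrightarrow> a \<in> lam u)"

definition focus_class :: "guarding \<Rightarrow> 'a set \<Rightarrow> ('r \<Rightarrow> 'a list set) \<Rightarrow> 'a set list \<Rightarrow> 'a
    \<Rightarrow> ('a set list \<times> 'a) set" where
  "focus_class g A R p a = {(q, a'). guarded_play g A R q \<and> a' \<in> lam q \<and> focus_sim p a q a'}"

definition guarded_decomposition :: "guarding \<Rightarrow> 'a set \<Rightarrow> ('r \<Rightarrow> 'a list set)
    \<Rightarrow> ('a \<Rightarrow> 'a set list) \<Rightarrow> bool" where
  "guarded_decomposition g A R \<tau> \<longleftrightarrow>
     (\<forall>a\<in>A. guarded_play g A R (\<tau> a)) \<and>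
     \<comment> \<open>reflexive\<close>
     (\<forall>a\<in>A. a \<in> lam (\<tau> a)) \<and>
     \<comment> \<open>edge covering\<close>
     (\<forall>a\<in>A. \<forall>b\<in>A. gaifman_adj R a b \<longrightarrow> (\<exists>p\<in>\<tau> ` A. a \<in> lam p \<and> b \<in> lam p)) \<and>
     \<comment> \<open>minimal\<close>
     (\<forall>a\<in>A. \<forall>q. guarded_play g A R q \<and> a \<in> lam q \<and>
        focus_class g A R (\<tau> a) a = focus_class g A R q a \<longrightarrow> prefix (\<tau> a) q) \<and>
     \<comment> \<open>vertex connected\<close>
     (\<forall>a\<in>A. \<forall>q. \<forall>p\<in>\<tau> ` A. q \<noteq> [] \<and> prefix q p \<and> a \<in> lam q \<longrightarrow>
        focus_class g A R (\<tau> a) a = focus_class g A R q a)"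

end

theory Submission
  imports Defs
begin

lemma lcp_self_prefix: "prefix xs ys \<Longrightarrow> longest_common_prefix xs ys = xs"
  by (metis longest_common_prefix_max_prefix longest_common_prefix_prefix1 prefix_order.antisym prefix_order.refl)

lemma decomp_parts:
  assumes "guarded_decomposition g A R \<tau>"
  shows "\<And>a. a \<in> A \<Longrightarrow> guarded_play g A R (\<tau> a)"
    and "\<And>a. a \<in> A \<Longrightarrow> a \<in> lam (\<tau> a)"
    and "\<And>a b. a \<in> A \<Longrightarrow> b \<in> A \<Longrightarrow> gaifman_adj R a b \<Longrightarrow> (\<exists>p\<in>\<tau> ` A. a \<in> lam p \<and> b \<in> lam p)"
    and "\<And>a q. a \<in> A \<Longrightarrow> guarded_play g A R q \<Longrightarrow> a \<in> lam q \<Longrightarrow>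
        focus_class g A R (\<tau> a) a = focus_class g A R q a \<Longrightarrow> prefix (\<tau> a) q"
    and "\<And>a q p. a \<in> A \<Longrightarrow> p \<in> \<tau> ` A \<Longrightarrow> q \<noteq> [] \<Longrightarrow> prefix q p \<Longrightarrow> a \<in> lam q \<Longrightarrow>
        focus_class g A R (\<tau> a) a = focus_class g A R q a"
  using assms unfolding guarded_decomposition_def by blast+

lemma key:
  assumes d: "guarded_decomposition g A R \<tau>" and a: "a \<in> A" and p: "p \<in> \<tau> ` A"
    and ap: "a \<in> lam p"
  shows "prefix (\<tau> a) p \<and> (\<forall>u. prefix (\<tau> a) u \<and> prefix u p \<longrightarrow> a \<in> lam u)"
proof -
  obtain a' where a': "a' \<in> A" "p = \<tau> a'" using p by blast
  have gp: "guarded_play g A R p" using decomp_parts(1)[OF d a'(1)] a'(2) by simp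
  hence pne: "p \<noteq> []" unfolding guarded_play_def by auto
  have eq: "focus_class g A R (\<tau> a) a = focus_class g A R p a"
    using decomp_parts(5)[OF d a p pne _ ap] by simp
  have pre: "prefix (\<tau> a) p"
    using decomp_parts(4)[OF d a gp ap eq] .
  have lpp: "longest_common_prefix p p = p" using lcp_self_prefix[of p p] by simp
  have "focus_sim p a p a"
    unfolding focus_sim_def lpp using pne ap
    by (metis prefix_order.antisym)
  hence "(p, a) \<in> focus_class g A R p a" unfolding focus_class_def using gp ap by auto
  hence "(p, a) \<in> focus_class g A R (\<tau> a) a" using eq by simp
  hence "focus_sim (\<tau> a) a p a" unfolding focus_class_def by auto
  hence "\<forall>u. prefix (\<tau> a) u \<and> prefix u p \<longrightarrow> a \<in> lam u"
    unfolding focus_sim_def lcp_self_prefix[OF pre] by blast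
  with pre show ?thesis by blast
qed

lemma clique_in_bag:
  assumes d: "guarded_decomposition g A R \<tau>" and fin: "finite A"
    and X: "gaifman_clique A R X"
  shows "\<exists>m\<in>A. X \<subseteq> lam (\<tau> m)"
proof -
  have XA: "X \<subseteq> A" "X \<noteq> {}" using X unfolding gaifman_clique_def by auto
  have finX: "finite X" using fin XA finite_subset by blast
  obtain m where m: "m \<in> X" "\<forall>x\<in>X. length (\<tau> x) \<le> length (\<tau> m)"
  proof -
    let ?M = "Max ((\<lambda>x. length (\<tau> x)) ` X)"
    have "?M \<in> (\<lambda>x. length (\<tau> x)) ` X" using finX XA(2) by (intro Max_in) auto
    then obtain m where "m \<in> X" "length (\<tau> m) = ?M" by auto
    moreover have "\<forall>x\<in>X. length (\<tau> x) \<le> ?M" using finX by auto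
    ultimately show ?thesis using that by metis
  qed
  have "X \<subseteq> lam (\<tau> m)"
  proof
    fix a assume aX: "a \<in> X"
    show "a \<in> lam (\<tau> m)"
    proof (cases "a = m")
      case True thus ?thesis using decomp_parts(2)[OF d] m XA by auto
    next
      case False
      hence adj: "gaifman_adj R a m" using X aX m unfolding gaifman_clique_def by auto
      have aA: "a \<in> A" and mA: "m \<in> A" using aX m XA by auto
      obtain p where p: "p \<in> \<tau> ` A" "a \<in> lam p" "m \<in> lam p"
        using decomp_parts(3)[OF d aA mA adj] by blast
      have ka: "prefix (\<tau> a) p \<and> (\<forall>u. prefix (\<tau> a) u \<and> prefix u p \<longrightarrow> a \<in> lam u)"
        using key[OF d aA p(1,2)] .
      have km: "prefix (\<tau> m) p" using key[OF d mA p(1,3)] by blast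
      have "prefix (\<tau> a) (\<tau> m)"
        using ka km m(2) aX prefix_length_prefix by blast
      thus ?thesis using ka km by blast
    qed
  qed
  thus ?thesis using m XA by blast
qed

lemma bag_guarded:
  assumes d: "guarded_decomposition g A R \<tau>" and m: "m \<in> A"
  shows "guarded g A R (lam (\<tau> m))"
  using decomp_parts(1)[OF d m] unfolding guarded_play_def lam_def by auto

lemma guarded_mono:
  assumes "guarded g A R Y" "X \<subseteq> Y" "X \<noteq> {}"
  shows "guarded g A R X"
proof (cases g)
  case AtomG
  hence Y: "atom_guarded A R Y" using assms by simp
  have "atom_guarded A R X" unfolding atom_guarded_def
  proof (intro conjI)
    show "X \<noteq> {}" "X \<subseteq> A" using Y assms(2,3) unfolding atom_guarded_def by auto
    show "(\<exists>a. X = {a}) \<or> (\<exists>r. \<exists>t\<in>R r. X \<subseteq> set t)"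
    proof -
      have "(\<exists>a. Y = {a}) \<or> (\<exists>r. \<exists>t\<in>R r. Y \<subseteq> set t)" using Y unfolding atom_guarded_def by blast
      thus ?thesis
      proof
        assume "\<exists>a. Y = {a}" then obtain c where "Y = {c}" by blast
        hence "X = {c}" using assms(2,3) by blast
        thus ?thesis by blast
      next
        assume "\<exists>r. \<exists>t\<in>R r. Y \<subseteq> set t"
        then obtain r t where "t \<in> R r" "Y \<subseteq> set t" by blast
        hence "X \<subseteq> set t" using assms(2) by blast
        thus ?thesis using \<open>t \<in> R r\<close> by blast
      qed
    qed
  qed
  thus ?thesis using AtomG by simp
next
  case LooseG
  hence Y: "loose_guarded A R Y" using assms by simp
  have "loose_guarded A R X" unfolding loose_guarded_def
  proof (intro conjI ballI)
    show "X \<noteq> {}" "X \<subseteq> A" using Y assms(2,3) unfolding loose_guarded_def by auto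
    fix a b assume "a \<in> X" "b \<in> X"
    hence "a \<in> Y" "b \<in> Y" using assms(2) by auto
    thus "\<exists>Z. atom_guarded A R Z \<and> a \<in> Z \<and> b \<in> Z" using Y unfolding loose_guarded_def by blast
  qed
  thus ?thesis using LooseG by simp
next
  case CliqueG thus ?thesis using assms by (auto simp: clique_guarded_def gaifman_clique_def)
qed

lemma guarded_clique:
  assumes "guarded g A R X"
  shows "gaifman_clique A R X"
proof (cases g)
  case AtomG thus ?thesis using assms
    by (auto simp: atom_guarded_def gaifman_clique_def gaifman_adj_def)
next
  case LooseG
  thus ?thesis using assms unfolding gaifman_clique_def
  proof (intro conjI ballI impI)
    have L: "loose_guarded A R X" using assms LooseG by simp
    thus "X \<noteq> {}" "X \<subseteq> A" unfolding loose_guarded_def by auto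
    fix a b assume ab: "a \<in> X" "b \<in> X" "a \<noteq> b"
    then obtain Y where Y: "atom_guarded A R Y" "a \<in> Y" "b \<in> Y"
      using L unfolding loose_guarded_def by blast
    have "\<not> (\<exists>c. Y = {c})" using Y ab(3) by auto
    then obtain r t where "t \<in> R r" "Y \<subseteq> set t" using Y(1) unfolding atom_guarded_def by blast
    thus "gaifman_adj R a b" using Y ab(3) unfolding gaifman_adj_def by blast
  qed
next
  case CliqueG thus ?thesis using assms by (auto simp: clique_guarded_def)
qed

theorem proposition4p4:
  fixes g :: guarding and ar :: "'r \<Rightarrow> nat" and A :: "'a set"
    and R :: "'r \<Rightarrow> 'a list set" and \<tau> :: "'a \<Rightarrow> 'a set list"
  assumes "sigma_structure ar A R"
    and "finite A"
    and "guarded_decomposition g A R \<tau>"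
  shows "(\<forall>X. maximal_guarded g A R X \<longrightarrow> (\<exists>p\<in>\<tau> ` A. lam p = X))
       \<and> (\<forall>X. gaifman_clique A R X \<longrightarrow> guarded g A R X)"
proof (intro conjI allI impI)
  fix X assume mx: "maximal_guarded g A R X"
  hence gX: "guarded g A R X" unfolding maximal_guarded_def by auto
  obtain m where m: "m \<in> A" "X \<subseteq> lam (\<tau> m)"
    using clique_in_bag[OF assms(3,2) guarded_clique[OF gX]] by blast
  have "lam (\<tau> m) = X" using mx m bag_guarded[OF assms(3) m(1)]
    unfolding maximal_guarded_def by blast
  thus "\<exists>p\<in>\<tau> ` A. lam p = X" using m by blast
next
  fix X assume c: "gaifman_clique A R X"
  obtain m where m: "m \<in> A" "X \<subseteq> lam (\<tau> m)"
    using clique_in_bag[OF assms(3,2) c] by blast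
  show "guarded g A R X"
    using guarded_mono[OF bag_guarded[OF assms(3) m(1)] m(2)] c
    unfolding gaifman_clique_def by auto
qed

end
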